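(* Let $(E,X,Y)$, with $X=(X_1,\dots,X_d)$, be generated by a structural causal model whose graph $\mathcal{G}$ is a DAG, whose distribution is faithful (and Markov) with respect to $\mathcal{G}$, and in which $E$ is exogenous (i.e. $E$ has no parents). Assume that $E$ is not a parent of $Y$ in $\mathcal{G}$. Then (i) $S_{\mathrm{IAS}}\in\mathcal{I}$, and (ii) $S_{\mathrm{ICP}}\subseteq S_{\mathrm{IAS}}$, with equality if and only if $S_{\mathrm{ICP}}\in\mathcal{I}$.
   Context: For $S\subseteq[d]=\{1,\dots,d\}$, write $X_S=(X_j)_{j\in S}$. A set $S\subseteq[d]$ is called invariant if $Y\perp\!\!\!\perp E\mid X_S$; $\mathcal{I}$ denotes the collection of all invariant sets. A set $S$ is minimally invariant if $S\in\mathcal{I}$ and no proper subset $S'\subsetneq S$ lies in $\mathcal{I}$. Define $S_{\mathrm{ICP}}=\bigcap_{S\in\mathcal{I}}S$ (with $S_{\mathrm{ICP}}=\emptyset$ if $\mathcal{I}=\emptyset$) and $S_{\mathrm{IAS}}=\bigcup_{S\text{ minimally invariant}}S$ (with the union over the empty collection being $\emptyset$). *)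

theory Defs
  imports Main
begin

text \<open>Nodes of the causal graph: the environment E, the response Y, and covariates X_1..X_d.\<close>
datatype node = Env | Tgt | Cov nat

definition nodes :: "nat \<Rightarrow> node set" where
  "nodes d = {Env, Tgt} \<union> Cov ` {1..d}"

text \<open>A directed graph is an edge relation: G u v means u \<rightarrow> v.\<close>
definition is_dag :: "nat \<Rightarrow> (node \<Rightarrow> node \<Rightarrow> bool) \<Rightarrow> bool" where
  "is_dag d G \<longleftrightarrow> (\<forall>u v. G u v \<longrightarrow> u \<in> nodes d \<and> v \<in> nodes d) \<and> (\<forall>v. \<not> G\<^sup>+\<^sup>+ v v)"

definition adj :: "(node \<Rightarrow> node \<Rightarrow> bool) \<Rightarrow> node \<Rightarrow> node \<Rightarrow> bool" where
  "adj G u v \<longleftrightarrow> G u v \<or> G v u"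

definition is_path :: "(node \<Rightarrow> node \<Rightarrow> bool) \<Rightarrow> node list \<Rightarrow> node \<Rightarrow> node \<Rightarrow> bool" where
  "is_path G p a b \<longleftrightarrow> p \<noteq> [] \<and> hd p = a \<and> last p = b \<and> distinct p \<and>
     (\<forall>i. Suc i < length p \<longrightarrow> adj G (p ! i) (p ! Suc i))"

definition collider :: "(node \<Rightarrow> node \<Rightarrow> bool) \<Rightarrow> node list \<Rightarrow> nat \<Rightarrow> bool" where
  "collider G p i \<longleftrightarrow> G (p ! (i - 1)) (p ! i) \<and> G (p ! Suc i) (p ! i)"

definition active_path :: "(node \<Rightarrow> node \<Rightarrow> bool) \<Rightarrow> node set \<Rightarrow> node list \<Rightarrow> bool" where
  "active_path G Z p \<longleftrightarrow> (\<forall>i. 0 < i \<and> Suc i < length p \<longrightarrow>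
     (if collider G p i then (\<exists>w \<in> Z. G\<^sup>*\<^sup>* (p ! i) w) else p ! i \<notin> Z))"

definition dsep :: "(node \<Rightarrow> node \<Rightarrow> bool) \<Rightarrow> node set \<Rightarrow> node set \<Rightarrow> node set \<Rightarrow> bool" where
  "dsep G A B Z \<longleftrightarrow> \<not> (\<exists>a\<in>A. \<exists>b\<in>B. \<exists>p. is_path G p a b \<and> active_path G Z p)"

text \<open>The conditional independence relation of the distribution of (E,X,Y) is modelled
  abstractly: indep A B Z means  X_A \<perp> X_B | X_Z.\<close>
definition markov_faithful ::
  "nat \<Rightarrow> (node \<Rightarrow> node \<Rightarrow> bool) \<Rightarrow> (node set \<Rightarrow> node set \<Rightarrow> node set \<Rightarrow> bool) \<Rightarrow> bool" where
  "markov_faithful d G indep \<longleftrightarrow>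
     (\<forall>A B Z. A \<subseteq> nodes d \<and> B \<subseteq> nodes d \<and> Z \<subseteq> nodes d \<and>
        A \<inter> B = {} \<and> A \<inter> Z = {} \<and> B \<inter> Z = {} \<longrightarrow> (indep A B Z \<longleftrightarrow> dsep G A B Z))"

definition invariant ::
  "nat \<Rightarrow> (node set \<Rightarrow> node set \<Rightarrow> node set \<Rightarrow> bool) \<Rightarrow> nat set \<Rightarrow> bool" where
  "invariant d indep S \<longleftrightarrow> S \<subseteq> {1..d} \<and> indep {Tgt} {Env} (Cov ` S)"

definition inv_sets :: "nat \<Rightarrow> (node set \<Rightarrow> node set \<Rightarrow> node set \<Rightarrow> bool) \<Rightarrow> nat set set" where
  "inv_sets d indep = {S. invariant d indep S}"

definition min_invariant ::
  "nat \<Rightarrow> (node set \<Rightarrow> node set \<Rightarrow> node set \<Rightarrow> bool) \<Rightarrow> nat set \<Rightarrow> bool" where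
  "min_invariant d indep S \<longleftrightarrow> invariant d indep S \<and> (\<forall>S'. S' \<subset> S \<longrightarrow> \<not> invariant d indep S')"

definition S_ICP :: "nat \<Rightarrow> (node set \<Rightarrow> node set \<Rightarrow> node set \<Rightarrow> bool) \<Rightarrow> nat set" where
  "S_ICP d indep = (if inv_sets d indep = {} then {} else \<Inter> (inv_sets d indep))"

definition S_IAS :: "nat \<Rightarrow> (node set \<Rightarrow> node set \<Rightarrow> node set \<Rightarrow> bool) \<Rightarrow> nat set" where
  "S_IAS d indep = \<Union> {S. min_invariant d indep S}"

end

theory Submission
  imports Defs
begin

lemma path_drop:
  assumes "is_path G p a b" "l < length p"
  shows "is_path G (drop l p) (p!l) b"
  using assms unfolding is_path_def
  by (auto simp: hd_drop_conv_nth last_drop)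

lemma collider_drop:
  assumes "0 < i" "l + i < length p"
  shows "collider G (drop l p) i \<longleftrightarrow> collider G p (l+i)"
proof -
  have "l + (i - 1) = l + i - 1" using assms by simp
  then show ?thesis using assms unfolding collider_def by simp
qed

lemma active_drop:
  assumes "active_path G Z p" "l < length p"
  shows "active_path G Z (drop l p)"
  unfolding active_path_def
proof (intro allI impI)
  fix i assume i: "0 < i \<and> Suc i < length (drop l p)"
  then have "0 < l + i \<and> Suc (l+i) < length p" by auto
  with assms(1) have "if collider G p (l+i) then (\<exists>w \<in> Z. G\<^sup>*\<^sup>* (p ! (l+i)) w) else p ! (l+i) \<notin> Z"
    unfolding active_path_def by blast
  then show "if collider G (drop l p) i then (\<exists>w \<in> Z. G\<^sup>*\<^sup>* (drop l p ! i) w) else drop l p ! i \<notin> Z"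
    using collider_drop[of i l p G] i by auto
qed

lemma splice:
  assumes acyc: "\<forall>v. \<not> G\<^sup>+\<^sup>+ v v"
    and R: "(\<lambda>u v. G u v \<and> u \<notin> Z)\<^sup>*\<^sup>* x y"
  shows "is_path G q x e \<Longrightarrow> active_path G Z q \<Longrightarrow> \<exists>p. is_path G p y e \<and> active_path G Z p"
  using R
proof (induction arbitrary: q rule: converse_rtranclp_induct)
  case base
  then show ?case by blast
next
  case (step x x')
  have Gxx': "G x x'" and xZ: "x \<notin> Z" using step.hyps(1) by auto
  show ?case
  proof (cases "x' \<in> set q")
    case True
    then obtain l where l: "l < length q" "q ! l = x'" by (meson in_set_conv_nth)
    show ?thesis
      using step.IH[OF _ active_drop[OF step.prems(2) l(1)]] path_drop[OF step.prems(1) l(1)] l(2) by simp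
  next
    case False
    have q: "q \<noteq> []" "hd q = x" "last q = e" "distinct q"
      "\<And>i. Suc i < length q \<Longrightarrow> adj G (q ! i) (q ! Suc i)"
      using step.prems(1) unfolding is_path_def by auto
    have q0: "q ! 0 = x" using q by (simp add: hd_conv_nth)
    have "is_path G (x' # q) x' e"
      unfolding is_path_def
    proof (intro conjI allI impI)
      fix i assume "Suc i < length (x' # q)"
      then show "adj G ((x' # q) ! i) ((x' # q) ! Suc i)"
        using q(5)[of "i - 1"] q0 Gxx' by (cases i) (auto simp: adj_def)
    qed (use q False in auto)
    moreover have "active_path G Z (x' # q)"
      unfolding active_path_def
    proof (intro allI impI)
      fix i assume i: "0 < i \<and> Suc i < length (x' # q)"
      then obtain j where j: "i = Suc j" by (cases i) auto
      show "if collider G (x' # q) i then (\<exists>w \<in> Z. G\<^sup>*\<^sup>* ((x' # q) ! i) w) else (x' # q) ! i \<notin> Z"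
      proof (cases j)
        case 0
        have "\<not> G x' x" using acyc Gxx' by (metis tranclp.r_into_trancl tranclp_trans)
        then have "\<not> collider G (x' # q) i" using j 0 q0 by (simp add: collider_def)
        then show ?thesis using j 0 q0 xZ by simp
      next
        case (Suc m)
        have "collider G (x' # q) i \<longleftrightarrow> collider G q j"
          using j Suc by (simp add: collider_def)
        moreover have "0 < j \<and> Suc j < length q" using i j Suc by auto
        ultimately show ?thesis using step.prems(2) j unfolding active_path_def by auto
      qed
    qed
    ultimately show ?thesis using step.IH by blast
  qed
qed

lemma desc_R:
  assumes "G\<^sup>*\<^sup>* x y" "\<forall>u. G\<^sup>*\<^sup>* x u \<longrightarrow> u \<notin> Z"
  shows "(\<lambda>u v. G u v \<and> u \<notin> Z)\<^sup>*\<^sup>* x y"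
  using assms(1)
proof (induction rule: rtranclp_induct)
  case base then show ?case by simp
next
  case (step u v)
  then have "u \<notin> Z" using assms(2) by blast
  with step show ?case by (simp add: rtranclp.rtrancl_into_rtrancl)
qed

lemma mono_active:
  assumes acyc: "\<forall>v. \<not> G\<^sup>+\<^sup>+ v v"
    and anc: "\<forall>z\<in>Z'. G\<^sup>*\<^sup>* z Y" and sub: "Z \<subseteq> Z'"
    and p: "is_path G p Y e" and act: "active_path G Z' p"
  shows "\<exists>p'. is_path G p' Y e \<and> active_path G Z p'"
proof -
  define ok where "ok i \<longleftrightarrow> (if collider G p i then (\<exists>w \<in> Z. G\<^sup>*\<^sup>* (p ! i) w) else p ! i \<notin> Z)" for i
  define B where "B = {i. 0 < i \<and> Suc i < length p \<and> \<not> ok i}"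
  show ?thesis
  proof (cases "B = {}")
    case True
    then have "active_path G Z p" unfolding active_path_def B_def ok_def by blast
    with p show ?thesis by blast
  next
    case False
    have fin: "finite B" unfolding B_def by (rule finite_subset[of _ "{..<length p}"]) auto
    define k where "k = Max B"
    have kB: "k \<in> B" using Max_in[OF fin False] k_def by simp
    have kmax: "\<And>i. i \<in> B \<Longrightarrow> i \<le> k" using Max_ge[OF fin] k_def by simp
    have k: "0 < k" "Suc k < length p" "\<not> ok k" using kB B_def by auto
    have okZ': "if collider G p k then (\<exists>w \<in> Z'. G\<^sup>*\<^sup>* (p ! k) w) else p ! k \<notin> Z'"
      using act k unfolding active_path_def by blast
    have col: "collider G p k" using okZ' k(3) sub unfolding ok_def by (auto split: if_splits)
    then obtain w where w: "w \<in> Z'" "G\<^sup>*\<^sup>* (p ! k) w" using okZ' by auto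
    have noZ: "\<forall>u. G\<^sup>*\<^sup>* (p ! k) u \<longrightarrow> u \<notin> Z" using k(3) col unfolding ok_def by auto
    have "G\<^sup>*\<^sup>* (p ! k) Y" using w anc by (meson rtranclp_trans)
    then have R: "(\<lambda>u v. G u v \<and> u \<notin> Z)\<^sup>*\<^sup>* (p ! k) Y" by (rule desc_R[OF _ noZ])
    have q: "is_path G (drop k p) (p ! k) e" using path_drop[OF p] k by simp
    have "active_path G Z (drop k p)"
      unfolding active_path_def
    proof (intro allI impI)
      fix i assume i: "0 < i \<and> Suc i < length (drop k p)"
      have "k + i \<notin> B"
      proof
        assume "k + i \<in> B"
        then have "k + i \<le> k" by (rule kmax)
        with i show False by simp
      qed
      moreover have "0 < k + i" "Suc (k + i) < length p" using i by auto
      ultimately have "ok (k+i)" unfolding B_def by auto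
      then show "if collider G (drop k p) i then (\<exists>w \<in> Z. G\<^sup>*\<^sup>* (drop k p ! i) w) else drop k p ! i \<notin> Z"
        using collider_drop[of i k p G] i unfolding ok_def by auto
    qed
    then show ?thesis using splice[OF acyc R q] by blast
  qed
qed

lemma anc_noncollider:
  assumes anc: "\<forall>z\<in>Z. G\<^sup>*\<^sup>* z Y"
    and p: "is_path G p Y e" and act: "active_path G Z p" and noparent: "\<forall>v. \<not> G v e"
    and k: "0 < k" "Suc k < length p" "\<not> collider G p k"
  shows "G\<^sup>*\<^sup>* (p ! k) Y"
proof -
  have adjp: "\<And>i. Suc i < length p \<Longrightarrow> G (p ! i) (p ! Suc i) \<or> G (p ! Suc i) (p ! i)"
    using p unfolding is_path_def adj_def by auto
  have p0: "p ! 0 = Y" using p unfolding is_path_def by (metis hd_conv_nth)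
  have pl: "p ! (length p - 1) = e" using p unfolding is_path_def by (metis last_conv_nth)
  have actI: "\<And>i. 0 < i \<Longrightarrow> Suc i < length p \<Longrightarrow> (if collider G p i then (\<exists>w \<in> Z. G\<^sup>*\<^sup>* (p ! i) w) else p ! i \<notin> Z)"
    using act unfolding active_path_def by blast
  have colY: "G\<^sup>*\<^sup>* (p ! i) Y" if h: "0 < i" "Suc i < length p" "collider G p i" for i
  proof -
    obtain w where "w \<in> Z" "G\<^sup>*\<^sup>* (p ! i) w" using actI[OF h(1,2)] h(3) by auto
    then show ?thesis using anc by (meson rtranclp_trans)
  qed
  have fwd: "Suc i < length p \<Longrightarrow> G (p ! i) (p ! Suc i) \<Longrightarrow> G\<^sup>*\<^sup>* (p ! i) Y" for i
  proof (induction "length p - i" arbitrary: i rule: less_induct)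
    case less
    show ?case
    proof (cases "Suc (Suc i) = length p")
      case True
      then have "p ! Suc i = e" using pl by (metis diff_Suc_1)
      then show ?thesis using less.prems noparent by metis
    next
      case False
      then have ii: "Suc (Suc i) < length p" using less.prems by simp
      show ?thesis
      proof (cases "collider G p (Suc i)")
        case True
        then have "G\<^sup>*\<^sup>* (p ! Suc i) Y" using colY ii by simp
        then show ?thesis using less.prems(2) by (meson converse_rtranclp_into_rtranclp)
      next
        case False
        then have "\<not> G (p ! Suc (Suc i)) (p ! Suc i)" using less.prems(2) by (simp add: collider_def)
        then have "G (p ! Suc i) (p ! Suc (Suc i))" using adjp[OF ii] by blast
        then have "G\<^sup>*\<^sup>* (p ! Suc i) Y" using less.hyps[of "Suc i"] ii by simp
        then show ?thesis using less.prems(2) by (meson converse_rtranclp_into_rtranclp)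
      qed
    qed
  qed
  have bwd: "0 < i \<Longrightarrow> i < length p \<Longrightarrow> G (p ! i) (p ! (i - 1)) \<Longrightarrow> G\<^sup>*\<^sup>* (p ! i) Y" for i
  proof (induction i)
    case 0 then show ?case by simp
  next
    case (Suc j)
    show ?case
    proof (cases j)
      case 0
      then show ?thesis using Suc.prems p0 by auto
    next
      case (Suc m)
      have jj: "0 < j" "Suc j < length p" using Suc Suc.prems by auto
      show ?thesis
      proof (cases "collider G p j")
        case True
        then have "G\<^sup>*\<^sup>* (p ! j) Y" using colY jj by simp
        then show ?thesis using Suc.prems(3) by (simp add: converse_rtranclp_into_rtranclp)
      next
        case False
        then have "\<not> G (p ! (j - 1)) (p ! j)" using Suc.prems(3) by (simp add: collider_def)
        then have "G (p ! j) (p ! (j - 1))" using adjp[of "j - 1"] jj by simp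
        then have "G\<^sup>*\<^sup>* (p ! j) Y" using Suc.IH jj by simp
        then show ?thesis using Suc.prems(3) by (simp add: converse_rtranclp_into_rtranclp)
      qed
    qed
  qed
  have "G (p ! (k - 1)) (p ! k) \<or> G (p ! k) (p ! (k - 1))" using adjp[of "k - 1"] k by simp
  then show ?thesis
  proof
    assume a: "G (p ! (k - 1)) (p ! k)"
    then have "\<not> G (p ! Suc k) (p ! k)" using k(3) by (simp add: collider_def)
    then have "G (p ! k) (p ! Suc k)" using adjp[OF k(2)] by blast
    then show ?thesis using fwd k by simp
  next
    assume "G (p ! k) (p ! (k - 1))"
    then show ?thesis using bwd k by simp
  qed
qed

lemma inv_iff:
  assumes mf: "markov_faithful d G indep"
  shows "invariant d indep S \<longleftrightarrow> S \<subseteq> {1..d} \<and> \<not> (\<exists>p. is_path G p Tgt Env \<and> active_path G (Cov ` S) p)"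
proof (cases "S \<subseteq> {1..d}")
  case True
  have "Cov ` S \<subseteq> nodes d" using True unfolding nodes_def by auto
  moreover have "{Tgt} \<subseteq> nodes d" "{Env} \<subseteq> nodes d" unfolding nodes_def by auto
  moreover have "indep {Tgt} {Env} (Cov ` S) \<longleftrightarrow> dsep G {Tgt} {Env} (Cov ` S)"
  proof -
    have d: "{Tgt} \<inter> {Env} = {}" "{Tgt} \<inter> Cov ` S = {}" "{Env} \<inter> Cov ` S = {}" by auto
    show ?thesis using mf \<open>Cov ` S \<subseteq> nodes d\<close> \<open>{Tgt} \<subseteq> nodes d\<close> \<open>{Env} \<subseteq> nodes d\<close> d
      unfolding markov_faithful_def by blast
  qed
  ultimately show ?thesis using True unfolding invariant_def dsep_def by simp
next
  case False
  then show ?thesis unfolding invariant_def by simp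
qed

lemma nodes_path:
  assumes dag: "is_dag d G" and p: "is_path G p a b" and k: "Suc k < length p"
  shows "p ! k \<in> nodes d"
  using p k dag unfolding is_path_def is_dag_def adj_def by blast

definition ancY :: "nat \<Rightarrow> (node \<Rightarrow> node \<Rightarrow> bool) \<Rightarrow> nat set" where
  "ancY d G = {t \<in> {1..d}. G\<^sup>*\<^sup>* (Cov t) Tgt}"

lemma ancY_anc: "\<forall>z \<in> Cov ` T. G\<^sup>*\<^sup>* z Tgt" if "T \<subseteq> ancY d G"
  using that unfolding ancY_def by auto

lemma ancY_inv:
  assumes dag: "is_dag d G" and mf: "markov_faithful d G indep"
    and exo: "\<forall>v. \<not> G v Env" and np: "\<not> G Env Tgt"
  shows "invariant d indep (ancY d G)"
proof -
  have acyc: "\<forall>v. \<not> G\<^sup>+\<^sup>+ v v" using dag unfolding is_dag_def by simp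
  have "\<not> (is_path G p Tgt Env \<and> active_path G (Cov ` ancY d G) p)" for p
  proof
    assume pa: "is_path G p Tgt Env \<and> active_path G (Cov ` ancY d G) p"
    then have p: "is_path G p Tgt Env" and act: "active_path G (Cov ` ancY d G) p" by auto
    have anc: "\<forall>z \<in> Cov ` ancY d G. G\<^sup>*\<^sup>* z Tgt" using ancY_anc by blast
    have p0: "p ! 0 = Tgt" using p unfolding is_path_def by (metis hd_conv_nth)
    have pl: "p ! (length p - 1) = Env" using p unfolding is_path_def by (metis last_conv_nth)
    have dist: "distinct p" using p unfolding is_path_def by simp
    have ne: "p \<noteq> []" using p unfolding is_path_def by simp
    have allcol: "collider G p k" if k: "0 < k" "Suc k < length p" for k
    proof (rule ccontr)
      assume nc: "\<not> collider G p k"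
      have a: "G\<^sup>*\<^sup>* (p ! k) Tgt" using anc_noncollider[OF anc p act exo k nc] .
      have "p ! k \<noteq> Tgt" using p0 k ne nth_eq_iff_index_eq[OF dist, of k 0] by simp
      moreover have "p ! k \<noteq> Env" using pl k ne nth_eq_iff_index_eq[OF dist, of k "length p - 1"] by simp
      moreover have "p ! k \<in> nodes d" using nodes_path[OF dag p k(2)] .
      ultimately obtain t where t: "p ! k = Cov t" "t \<in> {1..d}" unfolding nodes_def by auto
      then have "t \<in> ancY d G" using a unfolding ancY_def by auto
      then have "p ! k \<in> Cov ` ancY d G" using t by auto
      moreover have "p ! k \<notin> Cov ` ancY d G" using act k nc unfolding active_path_def by auto
      ultimately show False by simp
    qed
    have "length p \<noteq> 1" using p0 pl by auto
    then have len: "length p \<ge> 2" using ne by (cases p) (auto simp: Suc_le_eq)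
    show False
    proof (cases "length p = 2")
      case True
      then have "adj G (p ! 0) (p ! 1)" using p unfolding is_path_def by auto
      moreover have "p ! 1 = Env" using pl True by simp
      ultimately show False using p0 exo np unfolding adj_def by auto
    next
      case False
      then have "collider G p 1" using allcol len by simp
      then have g: "G Tgt (p ! 1)" using p0 unfolding collider_def by simp
      have "if collider G p 1 then (\<exists>w \<in> Cov ` ancY d G. G\<^sup>*\<^sup>* (p ! 1) w) else p ! 1 \<notin> Cov ` ancY d G"
        using act False len unfolding active_path_def by auto
      then obtain w where "w \<in> Cov ` ancY d G" "G\<^sup>*\<^sup>* (p ! 1) w" using \<open>collider G p 1\<close> by auto
      then have "G\<^sup>*\<^sup>* (p ! 1) Tgt" using anc by (meson rtranclp_trans)
      then have "G\<^sup>+\<^sup>+ Tgt Tgt" using g by (meson rtranclp_into_tranclp2)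
      then show False using acyc by simp
    qed
  qed
  then show ?thesis using inv_iff[OF mf] unfolding ancY_def by auto
qed

lemma inv_restrict:
  assumes dag: "is_dag d G" and mf: "markov_faithful d G indep"
    and exo: "\<forall>v. \<not> G v Env"
    and S: "invariant d indep S"
  shows "invariant d indep (S \<inter> ancY d G)"
proof -
  have Sd: "S \<subseteq> {1..d}" using S inv_iff[OF mf] by auto
  have "\<not> (is_path G p Tgt Env \<and> active_path G (Cov ` (S \<inter> ancY d G)) p)" for p
  proof
    assume pa: "is_path G p Tgt Env \<and> active_path G (Cov ` (S \<inter> ancY d G)) p"
    then have p: "is_path G p Tgt Env" and act: "active_path G (Cov ` (S \<inter> ancY d G)) p" by auto
    have anc: "\<forall>z \<in> Cov ` (S \<inter> ancY d G). G\<^sup>*\<^sup>* z Tgt" using ancY_anc[of "S \<inter> ancY d G"] by blast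
    have "active_path G (Cov ` S) p"
      unfolding active_path_def
    proof (intro allI impI)
      fix k assume k: "0 < k \<and> Suc k < length p"
      have h: "if collider G p k then (\<exists>w \<in> Cov ` (S \<inter> ancY d G). G\<^sup>*\<^sup>* (p ! k) w) else p ! k \<notin> Cov ` (S \<inter> ancY d G)"
        using act k unfolding active_path_def by blast
      show "if collider G p k then (\<exists>w \<in> Cov ` S. G\<^sup>*\<^sup>* (p ! k) w) else p ! k \<notin> Cov ` S"
      proof (cases "collider G p k")
        case True then show ?thesis using h by auto
      next
        case False
        have a: "G\<^sup>*\<^sup>* (p ! k) Tgt" using anc_noncollider[OF anc p act exo] k False by blast
        have "p ! k \<notin> Cov ` S"
        proof
          assume "p ! k \<in> Cov ` S"
          then obtain t where t: "p ! k = Cov t" "t \<in> S" by auto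
          then have "t \<in> ancY d G" using a Sd unfolding ancY_def by auto
          then show False using h False t by auto
        qed
        then show ?thesis using False by simp
      qed
    qed
    then show False using S inv_iff[OF mf] p by blast
  qed
  then show ?thesis using inv_iff[OF mf] Sd by auto
qed

lemma inv_mono:
  assumes dag: "is_dag d G" and mf: "markov_faithful d G indep"
    and S: "invariant d indep S" and ST: "S \<subseteq> T" and T: "T \<subseteq> ancY d G"
  shows "invariant d indep T"
proof -
  have acyc: "\<forall>v. \<not> G\<^sup>+\<^sup>+ v v" using dag unfolding is_dag_def by simp
  have Td: "T \<subseteq> {1..d}" using T unfolding ancY_def by auto
  have "\<not> (is_path G p Tgt Env \<and> active_path G (Cov ` T) p)" for p
  proof
    assume "is_path G p Tgt Env \<and> active_path G (Cov ` T) p"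
    then obtain p' where "is_path G p' Tgt Env \<and> active_path G (Cov ` S) p'"
      using mono_active[OF acyc ancY_anc[OF T], of "Cov ` S" p Env] ST by blast
    then show False using S inv_iff[OF mf] by blast
  qed
  then show ?thesis using inv_iff[OF mf] Td by auto
qed

lemma exists_min:
  assumes "finite S" "invariant d indep S"
  shows "\<exists>S'\<subseteq>S. min_invariant d indep S'"
  using assms
proof (induction "card S" arbitrary: S rule: less_induct)
  case less
  show ?case
  proof (cases "min_invariant d indep S")
    case True then show ?thesis by blast
  next
    case False
    then obtain S' where S': "S' \<subset> S" "invariant d indep S'" using less.prems unfolding min_invariant_def by blast
    then have "card S' < card S" "finite S'" using less.prems(1) by (auto intro: psubset_card_mono rev_finite_subset)
    then obtain S'' where "S'' \<subseteq> S'" "min_invariant d indep S''" using less.hyps S' by blast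
    then show ?thesis using S' by blast
  qed
qed

theorem proposition3:
  fixes d :: nat
    and G :: "node \<Rightarrow> node \<Rightarrow> bool"
    and indep :: "node set \<Rightarrow> node set \<Rightarrow> node set \<Rightarrow> bool"
  assumes dag: "is_dag d G"
    and mf: "markov_faithful d G indep"
    and exo: "\<forall>v. \<not> G v Env"
    and not_parent: "\<not> G Env Tgt"
  shows "S_IAS d indep \<in> inv_sets d indep \<and>
         S_ICP d indep \<subseteq> S_IAS d indep \<and>
         (S_ICP d indep = S_IAS d indep \<longleftrightarrow> S_ICP d indep \<in> inv_sets d indep)"
proof -
  let ?A = "ancY d G"
  have Ainv: "invariant d indep ?A" using ancY_inv[OF dag mf exo not_parent] .
  have "finite ?A" unfolding ancY_def by auto
  then obtain S0 where S0: "min_invariant d indep S0" using exists_min Ainv by blast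
  have minA: "S \<subseteq> ?A" if "min_invariant d indep S" for S
  proof -
    have i: "invariant d indep S" using that unfolding min_invariant_def by simp
    have "invariant d indep (S \<inter> ?A)" using inv_restrict[OF dag mf exo i] .
    then have "\<not> (S \<inter> ?A \<subset> S)" using that unfolding min_invariant_def by blast
    then show ?thesis by blast
  qed
  have IAS_A: "S_IAS d indep \<subseteq> ?A" unfolding S_IAS_def using minA by blast
  have S0IAS: "S0 \<subseteq> S_IAS d indep" unfolding S_IAS_def using S0 by blast
  have S0inv: "invariant d indep S0" using S0 unfolding min_invariant_def by simp
  have IASinv: "invariant d indep (S_IAS d indep)" using inv_mono[OF dag mf S0inv S0IAS IAS_A] .
  have ne: "inv_sets d indep \<noteq> {}" using Ainv unfolding inv_sets_def by blast
  have ICP: "S_ICP d indep = \<Inter> (inv_sets d indep)" using ne unfolding S_ICP_def by simp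
  have ICP_sub: "S_ICP d indep \<subseteq> S" if "invariant d indep S" for S
    using that ICP unfolding inv_sets_def by blast
  have sub: "S_ICP d indep \<subseteq> S_IAS d indep" using ICP_sub[OF S0inv] S0IAS by blast
  have eq: "S_ICP d indep = S_IAS d indep \<longleftrightarrow> S_ICP d indep \<in> inv_sets d indep"
  proof
    assume "S_ICP d indep = S_IAS d indep"
    then show "S_ICP d indep \<in> inv_sets d indep" using IASinv unfolding inv_sets_def by simp
  next
    assume h: "S_ICP d indep \<in> inv_sets d indep"
    have all: "S = S_ICP d indep" if "min_invariant d indep S" for S
    proof -
      have "S_ICP d indep \<subseteq> S" using ICP_sub that unfolding min_invariant_def by blast
      moreover have "\<not> S_ICP d indep \<subset> S" using h that unfolding min_invariant_def inv_sets_def by blast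
      ultimately show ?thesis by blast
    qed
    have "{S. min_invariant d indep S} = {S_ICP d indep}" using all S0 by blast
    then show "S_ICP d indep = S_IAS d indep" unfolding S_IAS_def by simp
  qed
  show ?thesis using IASinv sub eq unfolding inv_sets_def by simp
qed

end
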